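(* Let $d$ be a nonnegative integer and let $H$ be a multigraph of even order with $\Delta(H) \le d+1$, having exactly $r$ vertices of degree $d+1$, and with $d+1 < \Gamma(H) \le d+2$. Let $S \subseteq V(H)$ with $|S|$ odd, $|S|\ge 3$, such that $\langle S\rangle$ is $(d+1)$-overfull in $H$ and $\operatorname{sl}(\langle S\rangle, d+1)$ is minimum among all $(d+1)$-overfull induced odd-order subgraphs of $H$. Then $\Delta(H_S)\le d+1$, $\Gamma(H_S)\le d+2$, and $H_S$ has at most $r$ vertices of degree $d+1$; similarly $\Delta(H_{S^c})\le d+1$, $\Gamma(H_{S^c})\le d+2$, and $H_{S^c}$ has at most $r$ vertices of degree $d+1$, where $S^c=V(H)\setminus S$.
   Context: Multigraphs are finite and loopless, multiple edges allowed. For $S \subseteq V(H)$, $\langle S\rangle$ is the induced subgraph. For a multigraph $K$ of odd order $n(K)\ge 3$ with $e(K)$ edges, $t(K) = 2e(K)/(n(K)-1)$; $K$ is $k$-overfull if $t(K)>k$. The $k$-slack is $\operatorname{sl}(K,k) = (k+1)(n(K)-1)/2 - e(K)$. $\Gamma(H) = \max\{t(\langle R\rangle) : R\subseteq V(H), |R| \text{ odd}, |R|\ge 3\}$ (statements about $\Gamma$ of a multigraph with no such $R$ are vacuous). Shrinking: for a nonempty proper subset $S$ of $V(H)$, $H_S$ has vertex set $(V(H)\setminus S)\cup\{s\}$ for a new vertex $s$; its edges are the edges of $H - S$ together with, for each $u \notin S$, exactly as many edges $us$ as there are edges of $H$ joining $u$ to vertices of $S$. *)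

theory Defs
  imports Complex_Main
begin

definition multigraph :: "'a set \<Rightarrow> ('a \<Rightarrow> 'a \<Rightarrow> nat) \<Rightarrow> bool" where
  "multigraph V m \<longleftrightarrow> finite V \<and> (\<forall>x y. m x y = m y x) \<and> (\<forall>x. m x x = 0)
     \<and> (\<forall>x y. m x y > 0 \<longrightarrow> x \<in> V \<and> y \<in> V)"

definition deg :: "'a set \<Rightarrow> ('a \<Rightarrow> 'a \<Rightarrow> nat) \<Rightarrow> 'a \<Rightarrow> nat" where
  "deg V m v = (\<Sum>u\<in>V. m v u)"

definition maxdeg :: "'a set \<Rightarrow> ('a \<Rightarrow> 'a \<Rightarrow> nat) \<Rightarrow> nat" where
  "maxdeg V m = Max (deg V m ` V)"

definition edges_in :: "('a \<Rightarrow> 'a \<Rightarrow> nat) \<Rightarrow> 'a set \<Rightarrow> nat" where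
  "edges_in m R = (\<Sum>x\<in>R. \<Sum>y\<in>R. m x y) div 2"

definition tval :: "('a \<Rightarrow> 'a \<Rightarrow> nat) \<Rightarrow> 'a set \<Rightarrow> real" where
  "tval m R = 2 * real (edges_in m R) / (real (card R) - 1)"

definition overfull :: "('a \<Rightarrow> 'a \<Rightarrow> nat) \<Rightarrow> 'a set \<Rightarrow> nat \<Rightarrow> bool" where
  "overfull m R k \<longleftrightarrow> odd (card R) \<and> card R \<ge> 3 \<and> tval m R > real k"

definition slack :: "('a \<Rightarrow> 'a \<Rightarrow> nat) \<Rightarrow> 'a set \<Rightarrow> nat \<Rightarrow> int" where
  "slack m R k = int ((k + 1) * (card R - 1) div 2) - int (edges_in m R)"

definition odd_sets :: "'a set \<Rightarrow> 'a set set" where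
  "odd_sets V = {R. R \<subseteq> V \<and> odd (card R) \<and> card R \<ge> 3}"

definition Gamma :: "'a set \<Rightarrow> ('a \<Rightarrow> 'a \<Rightarrow> nat) \<Rightarrow> real" where
  "Gamma V m = Max (tval m ` odd_sets V)"

text \<open>Shrinking S to a new vertex: old vertices u become Some u, the new vertex is None.\<close>
definition shrinkV :: "'a set \<Rightarrow> 'a set \<Rightarrow> 'a option set" where
  "shrinkV V S = Some ` (V - S) \<union> {None}"

fun shrinkM :: "'a set \<Rightarrow> ('a \<Rightarrow> 'a \<Rightarrow> nat) \<Rightarrow> 'a set \<Rightarrow> 'a option \<Rightarrow> 'a option \<Rightarrow> nat" where
  "shrinkM V m S (Some u) (Some v) = (if u \<notin> S \<and> v \<notin> S then m u v else 0)"
| "shrinkM V m S (Some u) None = (if u \<in> V - S then (\<Sum>w\<in>S. m u w) else 0)"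
| "shrinkM V m S None (Some v) = (if v \<in> V - S then (\<Sum>w\<in>S. m v w) else 0)"
| "shrinkM V m S None None = 0"

definition num_deg :: "'a set \<Rightarrow> ('a \<Rightarrow> 'a \<Rightarrow> nat) \<Rightarrow> nat \<Rightarrow> nat" where
  "num_deg V m k = card {v \<in> V. deg V m v = k}"

end

theory Submission
  imports Defs
begin

definition WW :: "('a \<Rightarrow> 'a \<Rightarrow> nat) \<Rightarrow> 'a set \<Rightarrow> 'a set \<Rightarrow> nat" where
  "WW m A B = (\<Sum>x\<in>A. \<Sum>y\<in>B. m x y)"

lemma WW_un1: "finite A \<Longrightarrow> finite B \<Longrightarrow> A \<inter> B = {} \<Longrightarrow> WW m (A \<union> B) C = WW m A C + WW m B C"
  unfolding WW_def by (rule sum.union_disjoint)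

lemma WW_un2: "finite A \<Longrightarrow> finite B \<Longrightarrow> A \<inter> B = {} \<Longrightarrow> WW m C (A \<union> B) = WW m C A + WW m C B"
  unfolding WW_def by (simp add: sum.union_disjoint sum.distrib)

lemma WW_sym:
  assumes "multigraph V m" shows "WW m A B = WW m B A"
proof -
  have s: "\<And>x y. m x y = m y x" using assms by (auto simp: multigraph_def)
  have "WW m A B = (\<Sum>y\<in>B. \<Sum>x\<in>A. m x y)" unfolding WW_def by (rule sum.swap)
  also have "\<dots> = WW m B A" unfolding WW_def
    by (rule sum.cong[OF refl], rule sum.cong[OF refl], rule s)
  finally show ?thesis .
qed

lemma WW_single: "multigraph V m \<Longrightarrow> WW m {a} {a} = 0"
  by (simp add: WW_def multigraph_def)

lemma WW_insert:
  assumes "multigraph V m" "finite R" "a \<notin> R"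
  shows "WW m (insert a R) (insert a R) = 2 * WW m {a} R + WW m R R"
proof -
  have e: "insert a R = {a} \<union> R" by auto
  have "WW m ({a} \<union> R) ({a} \<union> R) = WW m {a} ({a} \<union> R) + WW m R ({a} \<union> R)"
    using assms by (intro WW_un1) auto
  also have "WW m {a} ({a} \<union> R) = WW m {a} {a} + WW m {a} R"
    using assms by (intro WW_un2) auto
  also have "WW m R ({a} \<union> R) = WW m R {a} + WW m R R"
    using assms by (intro WW_un2) auto
  finally have "WW m (insert a R) (insert a R) = WW m {a} {a} + WW m {a} R + (WW m R {a} + WW m R R)"
    unfolding e .
  also have "WW m R {a} = WW m {a} R" using WW_sym[OF assms(1)] by blast
  finally show ?thesis using WW_single[OF assms(1)] by simp
qed

lemma WW_even:
  assumes "multigraph V m" "finite R" shows "even (WW m R R)"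
  using assms(2)
proof (induction R rule: finite_induct)
  case empty then show ?case by (simp add: WW_def)
next
  case (insert a F) then show ?case using WW_insert[OF assms(1)] by simp
qed

lemma edges_WW: "multigraph V m \<Longrightarrow> finite R \<Longrightarrow> 2 * edges_in m R = WW m R R"
  using WW_even[of V m R] unfolding edges_in_def WW_def by simp

lemma edges_WW': "multigraph V m \<Longrightarrow> finite R \<Longrightarrow> edges_in m R = WW m R R div 2"
  unfolding edges_in_def WW_def by simp

lemma over_iff:
  assumes "multigraph V m" "finite R" "card R \<ge> 3"
  shows "tval m R > real k \<longleftrightarrow> k * (card R - 1) < WW m R R"
proof -
  have c: "real (card R) - 1 = real (card R - 1)" using assms by auto
  have p: "real (card R - 1) > 0" using assms by auto
  have e: "2 * real (edges_in m R) = real (WW m R R)"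
    using arg_cong[OF edges_WW[OF assms(1,2)], of real] by simp
  have "tval m R = real (WW m R R) / real (card R - 1)"
    unfolding tval_def c e ..
  then have "tval m R > real k \<longleftrightarrow> real k * real (card R - 1) < real (WW m R R)"
    using p by (simp add: pos_less_divide_eq)
  also have "\<dots> \<longleftrightarrow> k * (card R - 1) < WW m R R"
    by (simp only: of_nat_mult[symmetric] of_nat_less_iff)
  finally show ?thesis .
qed

lemma slack2:
  assumes "multigraph V m" "finite R" "odd (card R)"
  shows "2 * slack m R (d + 1) = int ((d + 2) * (card R - 1)) - int (WW m R R)"
proof -
  have "even (card R - 1)" using assms(3) by simp
  then have e: "even ((d + 2) * (card R - 1))" by simp
  have 1: "2 * ((d + 1 + 1) * (card R - 1) div 2) = (d + 2) * (card R - 1)"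
    using e by simp
  have 2: "2 * (WW m R R div 2) = WW m R R" using WW_even[OF assms(1,2)] by simp
  have a: "2 * int ((d + 1 + 1) * (card R - 1) div 2) = int ((d + 2) * (card R - 1))"
    using arg_cong[OF 1, of int] by simp
  have b: "2 * int (WW m R R div 2) = int (WW m R R)"
    using arg_cong[OF 2, of int] by simp
  show ?thesis unfolding slack_def edges_WW'[OF assms(1,2)] by (simp only: right_diff_distrib a b)
qed

lemma shrinkV_eq: "shrinkV V X = insert None (Some ` (V - X))"
  by (auto simp: shrinkV_def)

lemma shrink_mg:
  assumes "multigraph V m" "X \<subseteq> V"
  shows "multigraph (shrinkV V X) (shrinkM V m X)"
proof -
  have sy: "\<And>x y. m x y = m y x" and lo: "\<And>x. m x x = 0"
    and su: "\<And>x y. m x y > 0 \<Longrightarrow> x \<in> V \<and> y \<in> V" and fi: "finite V"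
    using assms(1) unfolding multigraph_def by blast+
  have A: "finite (shrinkV V X)" using fi by (simp add: shrinkV_eq)
  have B: "\<forall>x y. shrinkM V m X x y = shrinkM V m X y x"
  proof (intro allI)
    fix x y show "shrinkM V m X x y = shrinkM V m X y x"
      by (cases x; cases y) (simp_all, metis sy)
  qed
  have C: "\<forall>x. shrinkM V m X x x = 0"
  proof
    fix x show "shrinkM V m X x x = 0" by (cases x) (simp_all add: lo)
  qed
  have D: "\<forall>x y. shrinkM V m X x y > 0 \<longrightarrow> x \<in> shrinkV V X \<and> y \<in> shrinkV V X"
  proof (intro allI impI)
    fix x y assume "shrinkM V m X x y > 0"
    then show "x \<in> shrinkV V X \<and> y \<in> shrinkV V X"
      using su by (cases x; cases y) (auto simp: shrinkV_eq split: if_splits)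
  qed
  show ?thesis unfolding multigraph_def using A B C D by blast
qed

lemma shrink_deg_some:
  assumes mg: "multigraph V m" and XV: "X \<subseteq> V" and u: "u \<in> V - X"
  shows "deg (shrinkV V X) (shrinkM V m X) (Some u) = deg V m u"
proof -
  have fi: "finite V" using mg by (simp add: multigraph_def)
  have "deg (shrinkV V X) (shrinkM V m X) (Some u)
      = shrinkM V m X (Some u) None + (\<Sum>v\<in>Some ` (V - X). shrinkM V m X (Some u) v)"
    unfolding deg_def shrinkV_eq using fi by (subst sum.insert) auto
  also have "(\<Sum>v\<in>Some ` (V - X). shrinkM V m X (Some u) v) = (\<Sum>v\<in>V - X. m u v)"
    using u by (simp add: sum.reindex)
  also have "shrinkM V m X (Some u) None = (\<Sum>w\<in>X. m u w)" using u by simp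
  also have "(\<Sum>w\<in>X. m u w) + (\<Sum>v\<in>V - X. m u v) = deg V m u"
    unfolding deg_def using fi XV by (metis add.commute sum.subset_diff)
  finally show ?thesis .
qed

lemma shrink_deg_none:
  assumes mg: "multigraph V m" and XV: "X \<subseteq> V"
  shows "deg (shrinkV V X) (shrinkM V m X) None = WW m (V - X) X"
proof -
  have fi: "finite V" using mg by (simp add: multigraph_def)
  have "deg (shrinkV V X) (shrinkM V m X) None
      = shrinkM V m X None None + (\<Sum>v\<in>Some ` (V - X). shrinkM V m X None v)"
    unfolding deg_def shrinkV_eq using fi by (subst sum.insert) auto
  also have "\<dots> = WW m (V - X) X"
    unfolding WW_def by (simp add: sum.reindex)
  finally show ?thesis .
qed

lemma shrink_WW_some:
  assumes "A \<subseteq> V - X"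
  shows "WW (shrinkM V m X) (Some ` A) (Some ` A) = WW m A A"
  using assms unfolding WW_def
  by (simp add: sum.reindex) (intro sum.cong refl; auto)

lemma shrink_WW_none:
  assumes "A \<subseteq> V - X"
  shows "WW (shrinkM V m X) {None} (Some ` A) = WW m A X"
  using assms unfolding WW_def
  by (simp add: sum.reindex) (intro sum.cong refl; auto)

lemma shrink_main:
  assumes mg: "multigraph V m" and XV: "X \<subseteq> V"
  and degb: "\<And>v. v \<in> V \<Longrightarrow> deg V m v \<le> d + 1"
  and cut: "WW m (V - X) X \<le> d"
  and core: "\<And>A. A \<subseteq> V - X \<Longrightarrow> even (card A) \<Longrightarrow> card A \<ge> 2 \<Longrightarrow> WW m A A + 2 * WW m A X \<le> (d + 2) * card A"
  and gam: "\<And>A. A \<in> odd_sets V \<Longrightarrow> A \<subseteq> V - X \<Longrightarrow> tval m A \<le> real d + 2"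
  shows "maxdeg (shrinkV V X) (shrinkM V m X) \<le> d + 1
    \<and> (odd_sets (shrinkV V X) \<noteq> {} \<longrightarrow> Gamma (shrinkV V X) (shrinkM V m X) \<le> real d + 2)
    \<and> num_deg (shrinkV V X) (shrinkM V m X) (d + 1) \<le> num_deg V m (d + 1)"
proof (intro conjI impI)
  let ?V = "shrinkV V X" and ?m = "shrinkM V m X"
  have fi: "finite V" using mg by (simp add: multigraph_def)
  have fi': "finite ?V" using fi by (simp add: shrinkV_eq)
  have mg': "multigraph ?V ?m" using shrink_mg[OF mg XV] .
  have dn: "deg ?V ?m None \<le> d" using shrink_deg_none[OF mg XV] cut by simp
  have ds: "\<And>u. u \<in> V - X \<Longrightarrow> deg ?V ?m (Some u) = deg V m u"
    using shrink_deg_some[OF mg XV] by blast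
  have dall: "\<And>v. v \<in> ?V \<Longrightarrow> deg ?V ?m v \<le> d + 1"
  proof -
    fix v assume "v \<in> ?V"
    then show "deg ?V ?m v \<le> d + 1" using dn ds degb by (auto simp: shrinkV_eq)
  qed
  show "maxdeg ?V ?m \<le> d + 1" unfolding maxdeg_def
    using fi' dall by (subst Max_le_iff) (auto simp: shrinkV_eq)
  show "num_deg ?V ?m (d + 1) \<le> num_deg V m (d + 1)"
  proof -
    have "{v \<in> ?V. deg ?V ?m v = d + 1} \<subseteq> Some ` {u \<in> V. deg V m u = d + 1}"
      using dn ds by (auto simp: shrinkV_eq)
    then have "card {v \<in> ?V. deg ?V ?m v = d + 1} \<le> card (Some ` {u \<in> V. deg V m u = d + 1})"
      using fi by (intro card_mono) auto
    also have "\<dots> \<le> card {u \<in> V. deg V m u = d + 1}" by (rule card_image_le) (use fi in auto)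
    finally show ?thesis unfolding num_deg_def .
  qed
  assume ne: "odd_sets ?V \<noteq> {}"
  have fo: "finite (odd_sets ?V)"
    by (rule finite_subset[of _ "Pow ?V"]) (use fi' in \<open>auto simp: odd_sets_def\<close>)
  have each: "tval ?m R \<le> real d + 2" if R: "R \<in> odd_sets ?V" for R
  proof -
    define A where "A = {a. Some a \<in> R}"
    have RV: "R \<subseteq> ?V" and oR: "odd (card R)" and cR: "card R \<ge> 3" using R by (auto simp: odd_sets_def)
    have AV: "A \<subseteq> V - X" using RV by (auto simp: A_def shrinkV_eq)
    have fA: "finite A" using AV fi finite_subset by blast
    show ?thesis
    proof (cases "None \<in> R")
      case False
      have RA: "R = Some ` A"
      proof (rule set_eqI)
        fix x show "x \<in> R \<longleftrightarrow> x \<in> Some ` A" using False by (cases x) (auto simp: A_def)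
      qed
      have cA: "card R = card A" unfolding RA by (simp add: card_image)
      have "edges_in ?m R = edges_in m A"
        unfolding edges_WW'[OF mg' finite_subset[OF RV fi']] edges_WW'[OF mg fA]
        unfolding RA shrink_WW_some[OF AV] ..
      then have "tval ?m R = tval m A" unfolding tval_def cA by simp
      moreover have "A \<in> odd_sets V" using oR cR cA AV by (auto simp: odd_sets_def)
      ultimately show ?thesis using gam AV by simp
    next
      case True
      have RA: "R = insert None (Some ` A)"
      proof (rule set_eqI)
        fix x show "x \<in> R \<longleftrightarrow> x \<in> insert None (Some ` A)" using True by (cases x) (auto simp: A_def)
      qed
      have cA: "card R = card A + 1" unfolding RA using fA by (simp add: card_image)
      have W: "WW ?m R R = WW m A A + 2 * WW m A X"
        unfolding RA using WW_insert[OF mg', of "Some ` A" None] fA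
        shrink_WW_some[OF AV] shrink_WW_none[OF AV] by simp
      have "WW m A A + 2 * WW m A X \<le> (d + 2) * card A"
        using core[OF AV] oR cR cA by auto
      then have "real (WW m A A + 2 * WW m A X) \<le> real ((d + 2) * card A)"
        by (simp only: of_nat_le_iff)
      then have le: "real (WW ?m R R) \<le> (real d + 2) * real (card A)"
        unfolding W by (simp add: algebra_simps)
      have "2 * (WW ?m R R div 2) \<le> WW ?m R R" by simp
      then have "real (2 * (WW ?m R R div 2)) \<le> real (WW ?m R R)" by (simp only: of_nat_le_iff)
      then have "2 * real (edges_in ?m R) \<le> real (WW ?m R R)"
        unfolding edges_WW'[OF mg' finite_subset[OF RV fi']] by simp
      have pos: "real (card A) > 0" using cA cR by simp
      have "tval ?m R = 2 * real (edges_in ?m R) / real (card A)"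
        unfolding tval_def cA by simp
      also have "\<dots> \<le> real (WW ?m R R) / real (card A)"
        using \<open>2 * real (edges_in ?m R) \<le> real (WW ?m R R)\<close> pos by (simp add: divide_right_mono)
      also have "\<dots> \<le> real d + 2" using le pos by (simp add: pos_divide_le_eq)
      finally show ?thesis .
    qed
  qed
  show "Gamma ?V ?m \<le> real d + 2" unfolding Gamma_def
    using fo ne each by (subst Max_le_iff) auto
qed

lemma aux1:
  fixes x y z p0 p1 p2 a w s :: nat
  assumes "x + y + z \<le> p1" "p2 < x + 2 * z" "p2 = p1 + a" "p1 = p0 + a" "s = x + 2 * y + w"
  shows "w + p0 > s"
  using assms by linarith

lemma WW_deg:
  assumes "multigraph V m" "A \<subseteq> V" "\<And>v. v \<in> V \<Longrightarrow> deg V m v \<le> d + 1"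
  shows "WW m A V \<le> (d + 1) * card A"
proof -
  have "WW m A V = (\<Sum>a\<in>A. deg V m a)" unfolding WW_def deg_def ..
  also have "\<dots> \<le> (\<Sum>a\<in>A. d + 1)" using assms(2,3) by (intro sum_mono) auto
  finally show ?thesis by (simp add: mult.commute)
qed

theorem mainTheorem6:
  fixes V :: "'a set" and m :: "'a \<Rightarrow> 'a \<Rightarrow> nat" and d r :: nat and S :: "'a set"
  assumes "multigraph V m"
    and "even (card V)"
    and "maxdeg V m \<le> d + 1"
    and "num_deg V m (d + 1) = r"
    and "real d + 1 < Gamma V m" and "Gamma V m \<le> real d + 2"
    and "S \<subseteq> V" and "odd (card S)" and "card S \<ge> 3"
    and "overfull m S (d + 1)"
    and "\<forall>R \<in> odd_sets V. overfull m R (d + 1) \<longrightarrow> slack m S (d + 1) \<le> slack m R (d + 1)"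
  shows "maxdeg (shrinkV V S) (shrinkM V m S) \<le> d + 1
       \<and> (odd_sets (shrinkV V S) \<noteq> {} \<longrightarrow> Gamma (shrinkV V S) (shrinkM V m S) \<le> real d + 2)
       \<and> num_deg (shrinkV V S) (shrinkM V m S) (d + 1) \<le> r
       \<and> maxdeg (shrinkV V (V - S)) (shrinkM V m (V - S)) \<le> d + 1
       \<and> (odd_sets (shrinkV V (V - S)) \<noteq> {} \<longrightarrow> Gamma (shrinkV V (V - S)) (shrinkM V m (V - S)) \<le> real d + 2)
       \<and> num_deg (shrinkV V (V - S)) (shrinkM V m (V - S)) (d + 1) \<le> r"
proof -
  note mg = assms(1) and SV = assms(7)
  have fi: "finite V" using mg by (simp add: multigraph_def)
  have fS: "finite S" using SV fi finite_subset by blast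
  have degb: "\<And>v. v \<in> V \<Longrightarrow> deg V m v \<le> d + 1"
  proof -
    fix v assume v: "v \<in> V"
    have "deg V m v \<le> maxdeg V m" unfolding maxdeg_def using fi v by (intro Max_ge) auto
    then show "deg V m v \<le> d + 1" using assms(3) by simp
  qed
  have fo: "finite (odd_sets V)"
    by (rule finite_subset[of _ "Pow V"]) (use fi in \<open>auto simp: odd_sets_def\<close>)
  have gam: "\<And>A. A \<in> odd_sets V \<Longrightarrow> tval m A \<le> real d + 2"
  proof -
    fix A assume "A \<in> odd_sets V"
    then have "tval m A \<le> Gamma V m" unfolding Gamma_def using fo by (intro Max_ge) auto
    then show "tval m A \<le> real d + 2" using assms(6) by simp
  qed
  have "real (d + 1) < tval m S" using assms(10) unfolding overfull_def by simp
  then have ovS: "(d + 1) * (card S - 1) < WW m S S"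
    using over_iff[OF mg fS assms(9), of "d + 1"] by blast
  have mini: "int ((d + 2) * (card S - 1)) - int (WW m S S) \<le> int ((d + 2) * (card R - 1)) - int (WW m R R)"
    if R: "R \<in> odd_sets V" and ovR: "(d + 1) * (card R - 1) < WW m R R" for R
  proof -
    have RV: "R \<subseteq> V" and oR: "odd (card R)" and cR: "card R \<ge> 3" using R by (auto simp: odd_sets_def)
    have fR: "finite R" using RV fi finite_subset by blast
    have "real (d + 1) < tval m R" using ovR over_iff[OF mg fR cR, of "d + 1"] by blast
    then have "overfull m R (d + 1)" unfolding overfull_def using oR cR by simp
    then have "slack m S (d + 1) \<le> slack m R (d + 1)" using assms(11) R by blast
    then have "2 * slack m S (d + 1) \<le> 2 * slack m R (d + 1)" by simp
    then show ?thesis unfolding slack2[OF mg fR oR] slack2[OF mg fS assms(8)] .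
  qed
  have VS: "V = S \<union> (V - S)" using SV by auto
  have cut0: "WW m S (V - S) \<le> d"
  proof -
    have "WW m S V = WW m S S + WW m S (V - S)"
      using fi fS by (subst VS) (intro WW_un2, auto)
    moreover have "WW m S V \<le> (d + 1) * card S" using WW_deg[OF mg SV degb] .
    moreover have "(d + 1) * card S = (d + 1) * (card S - 1) + (d + 1)"
      using assms(9) by (cases "card S") auto
    ultimately show ?thesis using ovS by linarith
  qed
  have core1: "WW m A A + 2 * WW m A S \<le> (d + 2) * card A"
    if A: "A \<subseteq> V - S" "even (card A)" "card A \<ge> 2" for A
  proof (rule ccontr)
    assume h: "\<not> ?thesis"
    define T where "T = A \<union> S"
    have fA: "finite A" using A fi finite_subset by blast
    have dj: "A \<inter> S = {}" using A by auto
    have cT: "card T = card A + card S" unfolding T_def using fA fS dj by (rule card_Un_disjoint)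
    have "WW m T T = WW m A T + WW m S T" unfolding T_def using fA fS dj by (rule WW_un1)
    also have "WW m A T = WW m A A + WW m A S" unfolding T_def using fA fS dj by (rule WW_un2)
    also have "WW m S T = WW m S A + WW m S S" unfolding T_def using fA fS dj by (rule WW_un2)
    also have "WW m S A = WW m A S" by (rule WW_sym[OF mg])
    finally have WT: "WW m T T = WW m A A + 2 * WW m A S + WW m S S" by simp
    have TV: "T \<in> odd_sets V" using A SV assms(8,9) cT by (auto simp: odd_sets_def T_def)
    have cT1: "card T - 1 = (card S - 1) + card A" using cT assms(9) by simp
    have e1: "(d + 1) * (card T - 1) = (d + 1) * (card S - 1) + (d + 1) * card A"
      unfolding cT1 by (rule distrib_left)
    have e2: "(d + 2) * (card T - 1) = (d + 2) * (card S - 1) + (d + 2) * card A"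
      unfolding cT1 by (rule distrib_left)
    have e3: "(d + 1) * card A \<le> (d + 2) * card A" by simp
    have ovT: "(d + 1) * (card T - 1) < WW m T T" using e1 e3 WT h ovS by linarith
    have "int ((d + 2) * (card S - 1)) - int (WW m S S) \<le> int ((d + 2) * (card T - 1)) - int (WW m T T)"
      using mini[OF TV ovT] .
    then show False using e2 WT h by linarith
  qed
  have core2: "WW m A A + 2 * WW m A (V - S) \<le> (d + 2) * card A"
    if A0: "A \<subseteq> V - (V - S)" "even (card A)" "card A \<ge> 2" for A
  proof (rule ccontr)
    assume h: "\<not> ?thesis"
    have AS: "A \<subseteq> S" using A0 SV by auto
    define B where "B = S - A"
    have fA: "finite A" using AS fS finite_subset by blast
    have fB: "finite B" using fS by (simp add: B_def)
    have SAB: "S = A \<union> B" using AS by (auto simp: B_def)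
    have dj: "A \<inter> B = {}" by (auto simp: B_def)
    have cS: "card S = card A + card B" unfolding SAB using fA fB dj by (rule card_Un_disjoint)
    have oB: "odd (card B)" using cS assms(8) A0(2) by simp
    have WS: "WW m S S = WW m A A + 2 * WW m A B + WW m B B"
    proof -
      have "WW m S S = WW m A S + WW m B S" unfolding SAB using fA fB dj by (rule WW_un1)
      also have "WW m A S = WW m A A + WW m A B" unfolding SAB using fA fB dj by (rule WW_un2)
      also have "WW m B S = WW m B A + WW m B B" unfolding SAB using fA fB dj by (rule WW_un2)
      also have "WW m B A = WW m A B" by (rule WW_sym[OF mg])
      finally show ?thesis by simp
    qed
    have WA: "WW m A V = WW m A A + WW m A B + WW m A (V - S)"
    proof -
      have "WW m A V = WW m A S + WW m A (V - S)"
        using fi fS by (subst VS) (intro WW_un2, auto)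
      also have "WW m A S = WW m A A + WW m A B" unfolding SAB using fA fB dj by (rule WW_un2)
      finally show ?thesis .
    qed
    have dA: "WW m A V \<le> (d + 1) * card A" using WW_deg[OF mg _ degb] AS SV by blast
    have p1: "(d + 2) * card A = (d + 1) * card A + card A" by simp
    have p0: "(d + 1) * card A = d * card A + card A" by simp
    have key: "WW m B B + d * card A > WW m S S"
    proof -
      have q1: "WW m A A + WW m A B + WW m A (V - S) \<le> (d + 1) * card A" using dA WA by simp
      have q2: "(d + 2) * card A < WW m A A + 2 * WW m A (V - S)" using h by simp
      show ?thesis by (rule aux1[OF q1 q2 p1 p0 WS])
    qed
    show False
    proof (cases "card B \<ge> 3")
      case False
      then have "card B = 1" using oB by presburger
      then obtain b where "B = {b}" by (auto simp: card_Suc_eq)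
      then have "WW m B B = 0" using WW_single[OF mg] by simp
      moreover have "card S - 1 = card A" using cS \<open>card B = 1\<close> by simp
      ultimately show False using key ovS p0 by simp
    next
      case True
      have BO: "B \<in> odd_sets V" using True oB SV by (auto simp: odd_sets_def B_def)
      have cS1: "card S - 1 = (card B - 1) + card A" using cS True by simp
      have e1: "(d + 1) * (card S - 1) = (d + 1) * (card B - 1) + (d + 1) * card A"
        unfolding cS1 by (rule distrib_left)
      have e2: "(d + 2) * (card S - 1) = (d + 2) * (card B - 1) + (d + 2) * card A"
        unfolding cS1 by (rule distrib_left)
      have ovB: "(d + 1) * (card B - 1) < WW m B B" using e1 key ovS p0 by linarith
      have "int ((d + 2) * (card S - 1)) - int (WW m S S) \<le> int ((d + 2) * (card B - 1)) - int (WW m B B)"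
        using mini[OF BO ovB] .
      then show False using e2 key p1 p0 A0(3) by linarith
    qed
  qed
  have gam': "\<And>A X. A \<in> odd_sets V \<Longrightarrow> A \<subseteq> V - X \<Longrightarrow> tval m A \<le> real d + 2"
    using gam by blast
  have cut1: "WW m (V - S) S \<le> d" using cut0 WW_sym[OF mg, of S "V - S"] by simp
  have VVS: "V - (V - S) = S" using SV by auto
  have cut2: "WW m (V - (V - S)) (V - S) \<le> d" unfolding VVS by (rule cut0)
  note r1 = shrink_main[OF mg SV degb cut1 core1 gam']
  note r2 = shrink_main[OF mg Diff_subset degb cut2 core2 gam']
  show ?thesis using r1 r2 assms(4) by simp
qed
end
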